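(* Let $A^1,\dots,A^d\in\mathbb{C}^{D\times D}$ define an injective matrix product state tensor, let $o$ be an operator on $(\mathbb{C}^d)^{\otimes k}$ with matrix elements $o^{i_1\cdots i_k}_{j_1\cdots j_k}=\bra{i_1\cdots i_k}o\ket{j_1\cdots j_k}$, and let $\epsilon\in\mathbb{C}$. Suppose two families of matrices $B^{i_1\cdots i_{k-1}},\tilde B^{i_1\cdots i_{k-1}}\in\mathbb{C}^{D\times D}$ (indexed by $(i_1,\dots,i_{k-1})\in\{1,\dots,d\}^{k-1}$) both satisfy, for all $i_1,\dots,i_k$, $$\sum_{j_1,\dots,j_k}\Big(o^{i_1\cdots i_k}_{j_1\cdots j_k}-\epsilon\,\delta_{i_1j_1}\cdots\delta_{i_kj_k}\Big)A^{j_1}\cdots A^{j_k}=A^{i_1}C^{i_2\cdots i_k}-C^{i_1\cdots i_{k-1}}A^{i_k}$$ with $C=B$ and with $C=\tilde B$ respectively. Then there exists $\lambda\in\mathbb{C}$ such that $\tilde B^{i_1\cdots i_{k-1}}=B^{i_1\cdots i_{k-1}}+\lambda\,A^{i_1}\cdots A^{i_{k-1}}$ for all $i_1,\dots,i_{k-1}$.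
   Context: For $M\ge1$ define $\Gamma_M:\mathbb{C}^{D\times D}\to(\mathbb{C}^d)^{\otimes M}$, $\Gamma_M(X)=\sum_{i_1,\dots,i_M}\operatorname{Tr}(XA^{i_1}\cdots A^{i_M})\ket{i_1\cdots i_M}$. The tensor $A$ is injective if $\Gamma_M$ is injective for some $M$. *)

theory Defs
  imports "HOL-Analysis.Analysis"
begin

definition words :: "nat \<Rightarrow> nat \<Rightarrow> nat list set" where
  "words d M = {w. length w = M \<and> set w \<subseteq> {..<d}}"

fun mprod :: "(nat \<Rightarrow> complex^'D^'D) \<Rightarrow> nat list \<Rightarrow> complex^'D^'D" where
  "mprod A [] = mat 1"
| "mprod A (i # w) = A i ** mprod A w"

text \<open>Gamma_M(X) = sum_w Tr(X A^{i_1}...A^{i_M}) |i_1...i_M>, as a coefficient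
  function on words (zero outside words of length M over {0..<d}).\<close>
definition Gamma :: "(nat \<Rightarrow> complex^'D^'D) \<Rightarrow> nat \<Rightarrow> nat \<Rightarrow> complex^'D^'D \<Rightarrow> (nat list \<Rightarrow> complex)" where
  "Gamma A d M X = (\<lambda>w. if w \<in> words d M then trace (X ** mprod A w) else 0)"

definition injective_mps :: "(nat \<Rightarrow> complex^'D^'D) \<Rightarrow> nat \<Rightarrow> bool" where
  "injective_mps A d \<longleftrightarrow> (\<exists>M\<ge>1. inj (Gamma A d M))"

end

theory Submission
  imports Defs
begin

lemma msub_l: "(A::'a::comm_ring_1^'n^'m) ** (B - C) = A ** B - A ** (C::'a^'p^'n)"
  by (vector matrix_matrix_mult_def sum_subtractf right_diff_distrib)

lemma msub_r: "((B::'a::comm_ring_1^'n^'m) - C) ** (A::'a^'p^'n) = B ** A - C ** A"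
  by (vector matrix_matrix_mult_def sum_subtractf left_diff_distrib)

lemma mprod_append: "mprod A (u @ v) = mprod A u ** mprod A v"
  by (induction u) (auto simp: matrix_mul_assoc)

lemma words_Cons: "i # p \<in> words d (Suc L) \<longleftrightarrow> i < d \<and> p \<in> words d L"
  by (auto simp: words_def)

lemma Gamma_zero_imp:
  assumes inj: "inj (Gamma A d M)"
    and h: "\<And>u. u \<in> words d M \<Longrightarrow> trace (X ** mprod A u) = 0"
  shows "X = 0"
proof -
  have "Gamma A d M X = Gamma A d M 0"
    unfolding Gamma_def using h by (auto simp: trace_def)
  then show ?thesis using inj by (auto dest: injD)
qed

lemma annih1:
  fixes Y :: "complex^'D^'D"
  assumes inj: "inj (Gamma A d M)" and M: "M \<ge> 1"
    and h: "\<And>i. i < d \<Longrightarrow> Y ** A i = 0"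
  shows "Y = 0"
proof (rule Gamma_zero_imp[OF inj, of Y])
  fix u assume u: "u \<in> words d M"
  then obtain i u' where "u = i # u'" "i < d" using M
    by (cases u) (auto simp: words_def)
  then show "trace (Y ** mprod A u) = 0"
    using h by (simp add: matrix_mul_assoc trace_def)
qed

lemma annihL:
  fixes Y :: "complex^'D^'D"
  assumes inj: "inj (Gamma A d M)" and M: "M \<ge> 1"
  shows "(\<And>p. p \<in> words d L \<Longrightarrow> Y ** mprod A p = 0) \<Longrightarrow> Y = 0"
proof (induction L arbitrary: Y)
  case 0
  then show ?case by (auto simp: words_def)
next
  case (Suc L)
  show ?case
  proof (rule annih1[OF inj M])
    fix i assume i: "i < d"
    show "Y ** A i = 0"
    proof (rule Suc.IH)
      fix p assume "p \<in> words d L"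
      then have "i # p \<in> words d (Suc L)" using i by (simp add: words_Cons)
      from Suc.prems[OF this] show "Y ** A i ** mprod A p = 0"
        by (simp add: matrix_mul_assoc)
    qed
  qed
qed

lemma mat1_nz: "(mat 1 :: complex^'D^'D) \<noteq> 0"
proof
  assume "(mat 1 :: complex^'D^'D) = 0"
  then have "(mat 1 :: complex^'D^'D) $ undefined $ undefined = 0" by simp
  then show False by (simp add: mat_def)
qed

lemma key_tensor:
  fixes a b c e :: "complex^'D^'D"
  assumes inj: "inj (Gamma A d M)"
    and h: "\<And>q. q \<in> words d M \<Longrightarrow> a ** mprod A q ** b = c ** mprod A q ** e"
  shows "a $ i $ j * b $ k $ l = c $ i $ j * e $ k $ l"
proof -
  define W1 :: "complex^'D^'D" where "W1 = (\<chi> k j. b $ k $ l * a $ i $ j)"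
  define W2 :: "complex^'D^'D" where "W2 = (\<chi> k j. e $ k $ l * c $ i $ j)"
  have tr: "trace ((\<chi> k j. y $ k $ l * x $ i $ j) ** Z) = (x ** Z ** y) $ i $ l"
    for x y Z :: "complex^'D^'D"
    unfolding trace_def matrix_matrix_mult_def
    apply (simp add: sum_distrib_left sum_distrib_right)
    by (simp add: ac_simps)
  have "W1 - W2 = 0"
  proof (rule Gamma_zero_imp[OF inj])
    fix u assume "u \<in> words d M"
    then show "trace ((W1 - W2) ** mprod A u) = 0"
      using h[of u] by (simp add: msub_r trace_sub W1_def W2_def tr)
  qed
  then have "(W1 - W2) $ k $ j = 0" by simp
  then show ?thesis by (simp add: W1_def W2_def mult.commute)
qed

lemma shift:
  fixes X :: "nat list \<Rightarrow> complex^'D^'D"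
  assumes base: "\<And>ii. ii \<in> words d (Suc n) \<Longrightarrow>
      A (hd ii) ** X (tl ii) = X (butlast ii) ** A (last ii)"
  shows "set u \<subseteq> {..<d} \<Longrightarrow> w \<in> words d n \<Longrightarrow>
     mprod A u ** X w = X (take n (u @ w)) ** mprod A (drop n (u @ w))"
proof (induction u)
  case Nil
  then show ?case by (simp add: words_def)
next
  case (Cons i u')
  define xs where "xs = i # u' @ w"
  have len: "length xs > n" using Cons.prems by (simp add: xs_def words_def)
  have setxs: "set xs \<subseteq> {..<d}" using Cons.prems by (auto simp: xs_def words_def)
  define t where "t = take n (u' @ w)"
  have it: "i # t = take n xs @ [xs ! n]"
    using len by (simp add: t_def xs_def take_Suc_conv_app_nth[symmetric])
  have itw: "i # t \<in> words d (Suc n)"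
  proof -
    have "i # t = take (Suc n) xs" by (simp add: t_def xs_def)
    then show ?thesis using len setxs set_take_subset[of "Suc n" xs]
      by (auto simp: words_def)
  qed
  have b: "A i ** X t = X (take n xs) ** A (xs ! n)"
    using base[OF itw] it by (metis butlast_snoc last_snoc list.sel(1) list.sel(3) hd_Cons_tl)
  have dr: "drop n xs = xs ! n # drop n (u' @ w)"
  proof -
    have "drop n (u' @ w) = drop (Suc n) xs" by (simp add: xs_def)
    then show ?thesis using Cons_nth_drop_Suc[OF len] by simp
  qed
  have "mprod A (i # u') ** X w = A i ** (mprod A u' ** X w)"
    by (simp add: matrix_mul_assoc)
  also have "\<dots> = A i ** (X t ** mprod A (drop n (u' @ w)))"
    using Cons by (simp add: t_def)
  also have "\<dots> = X (take n xs) ** (A (xs ! n) ** mprod A (drop n (u' @ w)))"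
    using b by (simp add: matrix_mul_assoc)
  also have "\<dots> = X (take n ((i # u') @ w)) ** mprod A (drop n ((i # u') @ w))"
    using dr by (simp add: xs_def)
  finally show ?case .
qed

theorem theorem2:
  fixes A :: "nat \<Rightarrow> complex^'D^'D" and d k :: nat
    and Op :: "nat list \<Rightarrow> nat list \<Rightarrow> complex" and \<epsilon> :: complex
    and B Bt :: "nat list \<Rightarrow> complex^'D^'D"
  assumes inj: "injective_mps A d"
    and k: "k \<ge> 1"
    and hB: "\<And>ii. ii \<in> words d k \<Longrightarrow>
      (\<Sum>jj\<in>words d k. mat (Op ii jj - \<epsilon> * (if ii = jj then 1 else 0)) ** mprod A jj)
        = A (hd ii) ** B (tl ii) - B (butlast ii) ** A (last ii)"
    and hBt: "\<And>ii. ii \<in> words d k \<Longrightarrow>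
      (\<Sum>jj\<in>words d k. mat (Op ii jj - \<epsilon> * (if ii = jj then 1 else 0)) ** mprod A jj)
        = A (hd ii) ** Bt (tl ii) - Bt (butlast ii) ** A (last ii)"
  shows "\<exists>lam::complex. \<forall>ii\<in>words d (k - 1). Bt ii = B ii + mat lam ** mprod A ii"
proof -
  obtain M where M: "M \<ge> 1" and injG: "inj (Gamma A d M)"
    using inj unfolding injective_mps_def by blast
  define n where "n = k - 1"
  have kn: "k = Suc n" using k by (simp add: n_def)
  define X where "X = (\<lambda>w. Bt w - B w)"
  have base: "A (hd ii) ** X (tl ii) = X (butlast ii) ** A (last ii)"
    if ii: "ii \<in> words d (Suc n)" for ii
  proof -
    have e: "A (hd ii) ** Bt (tl ii) - Bt (butlast ii) ** A (last ii)
        = A (hd ii) ** B (tl ii) - B (butlast ii) ** A (last ii)"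
      using hB[of ii] hBt[of ii] ii kn by simp
    show ?thesis unfolding X_def msub_l msub_r
      using e by (simp add: algebra_simps)
  qed
  have tens: "mprod A p ** mprod A q ** X w = X p ** mprod A q ** mprod A w"
    if p: "p \<in> words d n" and q: "q \<in> words d M" and w: "w \<in> words d n" for p q w
  proof -
    have "set (p @ q) \<subseteq> {..<d}" using p q by (auto simp: words_def)
    from shift[of d n A X, OF base this w]
    have "mprod A (p @ q) ** X w = X (take n ((p @ q) @ w)) ** mprod A (drop n ((p @ q) @ w))"
      by blast
    also have "\<dots> = X p ** mprod A (q @ w)" using p by (simp add: words_def)
    finally show ?thesis by (simp add: mprod_append matrix_mul_assoc)
  qed
  have entries: "mprod A p $ i $ j * X w $ a $ b = X p $ i $ j * mprod A w $ a $ b"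
    if p: "p \<in> words d n" and w: "w \<in> words d n" for p w i j a b
    by (rule key_tensor[OF injG]) (rule tens[OF p _ w])
  have "\<exists>p0\<in>words d n. mprod A p0 \<noteq> 0"
  proof (rule ccontr)
    assume "\<not> ?thesis"
    then have "mat 1 = (0::complex^'D^'D)"
      using annihL[OF injG M, of n "mat 1"] by auto
    then show False using mat1_nz by blast
  qed
  then obtain p0 i0 j0 where p0: "p0 \<in> words d n" and nz: "mprod A p0 $ i0 $ j0 \<noteq> 0"
    by (metis vec_eq_iff zero_index)
  define lam where "lam = X p0 $ i0 $ j0 / mprod A p0 $ i0 $ j0"
  have matmul: "(mat c ** Z) $ a $ b = c * Z $ a $ b" for c :: complex and Z :: "complex^'D^'D" and a b
    by (simp add: matrix_matrix_mult_def mat_def if_distrib if_distribR sum.delta cong: if_cong)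
  show ?thesis
  proof (intro exI ballI)
    fix w assume w: "w \<in> words d (k - 1)"
    then have wn: "w \<in> words d n" by (simp add: n_def)
    have "X w = mat lam ** mprod A w"
    proof (subst vec_eq_iff, intro allI, subst vec_eq_iff, intro allI)
      fix a b
      show "X w $ a $ b = (mat lam ** mprod A w) $ a $ b"
        using entries[OF p0 wn, of i0 j0 a b] nz
        by (simp add: matmul lam_def field_simps)
    qed
    then show "Bt w = B w + mat lam ** mprod A w" by (simp add: X_def diff_eq_eq add.commute)
  qed
qed


end
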